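(* Let $n>1$ be an integer and let $\pi_2,\ldots,\pi_{n-1}\in[0,1]$ be arbitrary. Consider the Markov chain $X_0,X_1,\ldots$ on the state space $\{1,\ldots,n\}$ with transition probabilities $$p_{1,2}=p_{n,n-1}=1,\qquad p_{i,i+1}=\pi_i,\quad p_{i,i-1}=1-\pi_i \quad (2\le i\le n-1).$$ All other transition probabilities are $0$. For states $i,j$, let $T_{i,j}=\min\{t>0: X_t=j\}$ be the hitting time of $j$ when the chain is started at $X_0=i$. Then $$\mathrm{E}\{T_{1,n}+T_{n,1}\}\ge 2(n-1)^2.$$
   Context: Expectations may be infinite. In that case the inequality holds trivially. *)

theory Defs
  imports "HOL-Probability.Probability"
begin

definition trans_prob :: "nat \<Rightarrow> (nat \<Rightarrow> real) \<Rightarrow> nat \<Rightarrow> nat \<Rightarrow> real" where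
  "trans_prob n \<pi> i j =
     (if i = 1 then (if j = 2 then 1 else 0)
      else if i = n then (if j = n - 1 then 1 else 0)
      else if 2 \<le> i \<and> i \<le> n - 1 then
        (if j = i + 1 then \<pi> i else if j = i - 1 then 1 - \<pi> i else 0)
      else 0)"

text \<open>X is a Markov chain on the probability space M with transition probabilities
  trans_prob n pi and started at X 0 = i0: all finite-dimensional distributions are
  given by products of transition probabilities.\<close>
definition is_chain ::
  "'w measure \<Rightarrow> (nat \<Rightarrow> 'w \<Rightarrow> nat) \<Rightarrow> nat \<Rightarrow> (nat \<Rightarrow> real) \<Rightarrow> nat \<Rightarrow> bool" where
  "is_chain M X n \<pi> i0 \<longleftrightarrow>
     prob_space M \<and>
     (\<forall>t. X t \<in> measurable M (count_space UNIV)) \<and>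
     (\<forall>t xs. length xs = Suc t \<longrightarrow>
        measure M {\<omega> \<in> space M. \<forall>k\<le>t. X k \<omega> = xs ! k} =
          (if xs ! 0 = i0 then (\<Prod>k<t. trans_prob n \<pi> (xs ! k) (xs ! Suc k)) else 0))"

definition hit_time :: "(nat \<Rightarrow> 'w \<Rightarrow> nat) \<Rightarrow> nat \<Rightarrow> 'w \<Rightarrow> ennreal" where
  "hit_time X j \<omega> =
     (if \<exists>t>0. X t \<omega> = j then of_nat (LEAST t. t > 0 \<and> X t \<omega> = j) else \<infinity>)"

end

theory Submission
  imports Defs
begin


primrec cw :: "(nat \<Rightarrow> real) \<Rightarrow> nat \<Rightarrow> real" where
  "cw p 0 = 1"
| "cw p (Suc k) = (if k = 0 then 1 else cw p k * p (Suc k) / (1 - p (Suc k)))"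

lemma cw_pos:
  assumes "\<And>k. 2 \<le> k \<Longrightarrow> k \<le> m \<Longrightarrow> 0 < p k \<and> p k < 1"
  shows "k \<le> m \<Longrightarrow> cw p k > 0"
proof (induction k)
  case 0 then show ?case by simp
next
  case (Suc k)
  show ?case
  proof (cases "k = 0")
    case True then show ?thesis by simp
  next
    case False
    then have "0 < p (Suc k)" "p (Suc k) < 1" using assms[of "Suc k"] Suc.prems by auto
    moreover have "cw p k > 0" using Suc by simp
    ultimately show ?thesis using False by simp
  qed
qed

lemma CS_inv:
  fixes c :: "nat \<Rightarrow> real"
  assumes "finite I" "\<And>i. i \<in> I \<Longrightarrow> c i > 0"
  shows "(real (card I))^2 \<le> (\<Sum>i\<in>I. c i) * (\<Sum>i\<in>I. 1 / c i)"
proof -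
  have "(\<Sum>i\<in>I. sqrt (c i) * (1 / sqrt (c i)))\<^sup>2 \<le> (\<Sum>i\<in>I. (sqrt (c i))\<^sup>2) * (\<Sum>i\<in>I. (1 / sqrt (c i))\<^sup>2)"
    by (rule Cauchy_Schwarz_ineq_sum)
  moreover have "(\<Sum>i\<in>I. sqrt (c i) * (1 / sqrt (c i))) = (\<Sum>i\<in>I. 1)"
    by (intro sum.cong refl) (use assms(2) in force)
  moreover have "(\<Sum>i\<in>I. (sqrt (c i))\<^sup>2) = (\<Sum>i\<in>I. c i)"
    using assms by (intro sum.cong) (auto simp: less_imp_le)
  moreover have "(\<Sum>i\<in>I. (1 / sqrt (c i))\<^sup>2) = (\<Sum>i\<in>I. 1 / c i)"
    using assms by (intro sum.cong) (auto simp: less_imp_le power_divide)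
  ultimately show ?thesis by simp
qed

lemma alg:
  fixes p h h' :: "nat \<Rightarrow> real" and n :: nat
  assumes n1: "n > 1"
    and pr: "\<And>k. 2 \<le> k \<Longrightarrow> k \<le> n - 1 \<Longrightarrow> 0 < p k \<and> p k < 1"
    and h1: "h 1 = 1"
    and hr: "\<And>k. 2 \<le> k \<Longrightarrow> k \<le> n - 1 \<Longrightarrow> p k * h k = 1 + (1 - p k) * h (k - 1)"
    and g1: "h' 1 = 1"
    and gr: "\<And>k. 2 \<le> k \<Longrightarrow> k \<le> n - 1 \<Longrightarrow> (1 - p (n + 1 - k)) * h' k = 1 + p (n + 1 - k) * h' (k - 1)"
  shows "(\<Sum>k=1..n-1. h k) + (\<Sum>k=1..n-1. h' k) \<ge> 2 * real ((n - 1)^2)"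
proof -
  define c where "c = cw p"
  have cpos: "\<And>k. k \<le> n - 1 \<Longrightarrow> c k > 0" unfolding c_def by (rule cw_pos[OF pr])
  have crec: "\<And>k. 2 \<le> k \<Longrightarrow> c k = c (k - 1) * p k / (1 - p k)"
  proof -
    fix k :: nat assume "2 \<le> k"
    then obtain j where "k = Suc j" "j \<noteq> 0" by (cases k) auto
    then show "c k = c (k - 1) * p k / (1 - p k)" unfolding c_def by simp
  qed
  have c1: "c 1 = 1" unfolding c_def by simp
  have key: "\<And>k. 2 \<le> k \<Longrightarrow> k \<le> n - 1 \<Longrightarrow> c (k - 1) / (1 - p k) = c (k - 1) + c k"
  proof -
    fix k :: nat assume a: "2 \<le> k" "k \<le> n - 1"
    have "1 - p k > 0" using pr[OF a] by simp
    then show "c (k - 1) / (1 - p k) = c (k - 1) + c k"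
      using crec[OF a(1)] by (simp add: field_simps)
  qed
  have F1: "\<And>k. 1 \<le> k \<Longrightarrow> k \<le> n - 1 \<Longrightarrow> c k * h k = c k + 2 * (\<Sum>j=1..<k. c j)"
  proof -
    fix k :: nat
    show "1 \<le> k \<Longrightarrow> k \<le> n - 1 \<Longrightarrow> c k * h k = c k + 2 * (\<Sum>j=1..<k. c j)"
    proof (induction k rule: nat_induct_at_least)
      case base then show ?case using h1 c1 by simp
    next
      case (Suc k)
      have a: "2 \<le> Suc k" "Suc k \<le> n - 1" using Suc by auto
      have IH: "c k * h k = c k + 2 * (\<Sum>j=1..<k. c j)" using Suc by simp
      have pp: "1 - p (Suc k) > 0" using pr[OF a] by simp
      have e: "p (Suc k) * h (Suc k) = 1 + (1 - p (Suc k)) * h k" using hr[OF a] by simp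
      have cs: "c (Suc k) = c k / (1 - p (Suc k)) * p (Suc k)"
        using crec[OF a(1)] by simp
      have "c (Suc k) * h (Suc k) = c k / (1 - p (Suc k)) * (p (Suc k) * h (Suc k))"
        unfolding cs by (simp add: ac_simps)
      also have "\<dots> = c k / (1 - p (Suc k)) * (1 + (1 - p (Suc k)) * h k)"
        unfolding e ..
      also have "\<dots> = c k / (1 - p (Suc k)) + c k * h k"
        using pp by (simp add: field_simps)
      also have "\<dots> = c k + c (Suc k) + c k * h k" using key[OF a] by simp
      also have "\<dots> = c (Suc k) + 2 * (\<Sum>j=1..<Suc k. c j)"
        using IH Suc.hyps by (simp add: sum.atLeastLessThan_Suc)
      finally show ?case .
    qed
  qed
  have F2: "\<And>m. 1 \<le> m \<Longrightarrow> m \<le> n - 1 \<Longrightarrow> c (n - m) * h' m = c (n - m) + 2 * (\<Sum>j=n-m+1..n-1. c j)"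
  proof -
    fix m :: nat
    show "1 \<le> m \<Longrightarrow> m \<le> n - 1 \<Longrightarrow> c (n - m) * h' m = c (n - m) + 2 * (\<Sum>j=n-m+1..n-1. c j)"
    proof (induction m rule: nat_induct_at_least)
      case base then show ?case using g1 n1 by simp
    next
      case (Suc m)
      define i where "i = n - Suc m"
      have i1: "i \<ge> 1" "Suc i = n - m" using Suc n1 unfolding i_def by auto
      have a: "2 \<le> Suc i" "Suc i \<le> n - 1" using i1 Suc by auto
      have a2: "2 \<le> Suc m" "Suc m \<le> n - 1" using Suc by auto
      have IH: "c (Suc i) * h' m = c (Suc i) + 2 * (\<Sum>j=Suc i+1..n-1. c j)" using Suc i1 by simp
      have pp: "1 - p (Suc i) > 0" using pr[OF a] by simp
      have nn: "n + 1 - Suc m = Suc i" using i1 Suc by auto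
      have e: "(1 - p (Suc i)) * h' (Suc m) = 1 + p (Suc i) * h' m" using gr[OF a2] nn by simp
      have "c i * h' (Suc m) = c i / (1 - p (Suc i)) * ((1 - p (Suc i)) * h' (Suc m))"
        using pp by (simp add: field_simps)
      also have "\<dots> = c i / (1 - p (Suc i)) * (1 + p (Suc i) * h' m)"
        unfolding e ..
      also have "\<dots> = c i / (1 - p (Suc i)) + c i * p (Suc i) / (1 - p (Suc i)) * h' m"
        by (simp add: algebra_simps add_divide_distrib)
      also have "\<dots> = c i + c (Suc i) + c (Suc i) * h' m" using key[OF a] crec[OF a(1)] by simp
      also have "\<dots> = c i + 2 * (\<Sum>j=i+1..n-1. c j)"
        using IH a by (simp add: sum.atLeast_Suc_atMost)
      finally show ?case unfolding i_def using Suc by (simp add: Suc_diff_Suc)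
    qed
  qed
  define C where "C = (\<Sum>j=1..n-1. c j)"
  have split: "\<And>k. 1 \<le> k \<Longrightarrow> k \<le> n - 1 \<Longrightarrow> C = (\<Sum>j=1..<k. c j) + c k + (\<Sum>j=k+1..n-1. c j)"
  proof -
    fix k :: nat assume a: "1 \<le> k" "k \<le> n - 1"
    have "{1..n-1} = {1..<k} \<union> {k..n-1}" using a by auto
    then have "C = (\<Sum>j=1..<k. c j) + (\<Sum>j=k..n-1. c j)"
      unfolding C_def by (simp add: sum.union_disjoint ivl_disj_int)
    also have "(\<Sum>j=k..n-1. c j) = c k + (\<Sum>j=k+1..n-1. c j)"
      using a by (simp add: sum.atLeast_Suc_atMost)
    finally show "C = (\<Sum>j=1..<k. c j) + c k + (\<Sum>j=k+1..n-1. c j)" by simp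
  qed
  have pair: "\<And>k. 1 \<le> k \<Longrightarrow> k \<le> n - 1 \<Longrightarrow> h k + h' (n - k) = 2 * C / c k"
  proof -
    fix k :: nat assume a: "1 \<le> k" "k \<le> n - 1"
    have ck: "c k > 0" using cpos a by simp
    have m: "1 \<le> n - k" "n - k \<le> n - 1" "n - (n - k) = k" "n - (n - k) + 1 = k + 1" using a by auto
    have "c k * (h k + h' (n - k)) = 2 * C"
      using F1[OF a] F2[OF m(1,2)] m(3,4) split[OF a] by (simp add: algebra_simps)
    then show "h k + h' (n - k) = 2 * C / c k" using ck by (simp add: field_simps)
  qed
  have re: "(\<Sum>k=1..n-1. h' k) = (\<Sum>k=1..n-1. h' (n - k))"
    by (rule sum.reindex_bij_witness[where i="\<lambda>k. n - k" and j="\<lambda>k. n - k"]) auto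
  have "(\<Sum>k=1..n-1. h k) + (\<Sum>k=1..n-1. h' k) = (\<Sum>k=1..n-1. 2 * C / c k)"
    unfolding re sum.distrib[symmetric] by (rule sum.cong) (auto simp: pair)
  also have "\<dots> = 2 * (C * (\<Sum>k=1..n-1. 1 / c k))"
    by (simp add: sum_distrib_left)
  finally have eq: "(\<Sum>k=1..n-1. h k) + (\<Sum>k=1..n-1. h' k) = 2 * (C * (\<Sum>k=1..n-1. 1 / c k))" .
  have "(real (card {1..n-1}))^2 \<le> C * (\<Sum>k=1..n-1. 1 / c k)"
    unfolding C_def by (rule CS_inv) (auto intro: cpos)
  then show ?thesis using eq by simp
qed




lemma one_plus_ennreal: "0 \<le> x \<Longrightarrow> 1 + ennreal x = ennreal (1 + x)"
  by (simp add: ennreal_plus)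

lemma step3:
  fixes X Y Z :: ennreal and a b :: real
  assumes ab: "0 \<le> a" "0 \<le> b" "a + b = 1"
    and eq: "Y = 1 + ennreal a * Z + ennreal b * X"
    and fin: "X < \<top>" "Y < \<top>"
    and d: "enn2real X - enn2real Y \<ge> 1"
  shows "a > 0 \<and> Z < \<top> \<and> a * (enn2real Y - enn2real Z) = 1 + b * (enn2real X - enn2real Y)
         \<and> enn2real Y - enn2real Z \<ge> 1"
proof -
  define x y where "x = enn2real X" "y = enn2real Y"
  have X: "X = ennreal x" and Y: "Y = ennreal y" and x0: "x \<ge> 0" and y0: "y \<ge> 0"
    using fin unfolding x_y_def by (auto simp: ennreal_enn2real)
  have apos: "a > 0"
  proof (rule ccontr)
    assume "\<not> a > 0"
    then have "a = 0" "b = 1" using ab by auto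
    then have "ennreal y = ennreal (1 + x)" using eq X Y x0 by (simp add: ennreal_plus)
    then have "enn2real (ennreal y) = enn2real (ennreal (1 + x))" by simp
    then have "y = 1 + x" using x0 y0 by (simp add: enn2real_plus)
    then show False using d unfolding x_y_def by simp
  qed
  have "ennreal a * Z \<le> Y" unfolding eq by (simp add: add_increasing2 add.commute)
  then have "ennreal a * Z < \<top>" using fin by (meson order.strict_trans1)
  then have Zf: "Z < \<top>" using apos by (auto simp: ennreal_mult_less_top)
  define z where "z = enn2real Z"
  have Z: "Z = ennreal z" and z0: "z \<ge> 0" using Zf unfolding z_def by (auto simp: ennreal_enn2real)
  have "ennreal y = ennreal (1 + a * z + b * x)"
    using eq X Y Z x0 z0 ab by (simp add: ennreal_plus ennreal_mult)
  then have "enn2real (ennreal y) = enn2real (ennreal (1 + a * z + b * x))" by simp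
  then have ye: "y = 1 + a * z + b * x" using x0 y0 z0 ab by (simp add: enn2real_plus)
  have bb: "b = 1 - a" using ab by simp
  have e2: "a * (y - z) = 1 + b * (x - y)"
    unfolding ye bb by (simp add: algebra_simps)
  have "1 + b * (x - y) \<ge> 1" using d ab unfolding x_y_def by simp
  then have "a * (y - z) \<ge> 1" using e2 by simp
  then have "y - z \<ge> 1"
  proof -
    assume A: "a * (y - z) \<ge> 1"
    show "y - z \<ge> 1"
    proof (rule ccontr)
      assume "\<not> y - z \<ge> 1"
      then have "a * (y - z) \<le> a * 1" using apos by (intro mult_left_mono) auto
      then have "a = 1" using A ab by simp
      then show False using A \<open>\<not> y - z \<ge> 1\<close> by simp
    qed
  qed
  then show ?thesis using apos Zf e2 unfolding x_y_def z_def by simp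
qed

lemma propag:
  fixes W :: "nat \<Rightarrow> ennreal" and a b :: "nat \<Rightarrow> real" and n :: nat
  assumes n1: "n > 1" and Wn: "W n = 0" and W1: "W 1 = 1 + W 2"
    and Wk: "\<And>k. 2 \<le> k \<Longrightarrow> k \<le> n - 1 \<Longrightarrow> W k = 1 + ennreal (a k) * W (k + 1) + ennreal (b k) * W (k - 1)"
    and ab: "\<And>k. 2 \<le> k \<Longrightarrow> k \<le> n - 1 \<Longrightarrow> 0 \<le> a k \<and> 0 \<le> b k \<and> a k + b k = 1"
    and fin: "W 1 < \<top>"
  shows "\<exists>h. h 1 = 1 \<and> (\<forall>k. 2 \<le> k \<and> k \<le> n - 1 \<longrightarrow> a k > 0 \<and> a k * h k = 1 + b k * h (k - 1))
           \<and> W 1 = ennreal (\<Sum>k=1..n-1. h k) \<and> (\<forall>k. 1 \<le> k \<and> k \<le> n - 1 \<longrightarrow> h k \<ge> 1)"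
proof -
  define h where "h k = enn2real (W k) - enn2real (W (k + 1))" for k
  have W2: "W 2 < \<top>" using W1 fin by (metis add.commute add_top ennreal_add_less_top top.not_eq_extremum) 
  have h1: "h 1 = 1"
  proof -
    obtain w2 where "W 2 = ennreal w2" "w2 \<ge> 0" using W2 by (metis ennreal_enn2real enn2real_nonneg)
    then have "enn2real (W 1) - enn2real (W 2) = 1" using W1 by (simp add: enn2real_plus)
    then show ?thesis unfolding h_def by (simp add: numeral_2_eq_2)
  qed
  have inv: "k \<le> n - 1 \<longrightarrow> W k < \<top> \<and> W (k + 1) < \<top> \<and> h k \<ge> 1 \<and>
      (2 \<le> k \<longrightarrow> a k > 0 \<and> a k * h k = 1 + b k * h (k - 1))" if "1 \<le> k" for k
    using that
  proof (induction k rule: nat_induct_at_least)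
    case base
    then show ?case using fin W2 h1 by (simp add: numeral_2_eq_2)
  next
    case (Suc k)
    show ?case
    proof
      assume le: "Suc k \<le> n - 1"
      have IH: "W k < \<top>" "W (k + 1) < \<top>" "h k \<ge> 1" using Suc le by auto
      have a2: "2 \<le> Suc k" using Suc by simp
      show "W (Suc k) < \<top> \<and> W (Suc k + 1) < \<top> \<and> 1 \<le> h (Suc k) \<and>
        (2 \<le> Suc k \<longrightarrow> 0 < a (Suc k) \<and> a (Suc k) * h (Suc k) = 1 + b (Suc k) * h (Suc k - 1))"
      proof -
        have abk: "0 \<le> a (Suc k)" "0 \<le> b (Suc k)" "a (Suc k) + b (Suc k) = 1" using ab[OF a2 le] by auto
        have eqk: "W (Suc k) = 1 + ennreal (a (Suc k)) * W (Suc k + 1) + ennreal (b (Suc k)) * W k"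
          using Wk[OF a2 le] by simp
        have d: "enn2real (W k) - enn2real (W (Suc k)) \<ge> 1" using IH(3) unfolding h_def by simp
        have S: "a (Suc k) > 0 \<and> W (Suc k + 1) < \<top> \<and>
          a (Suc k) * (enn2real (W (Suc k)) - enn2real (W (Suc k + 1))) = 1 + b (Suc k) * (enn2real (W k) - enn2real (W (Suc k)))
          \<and> enn2real (W (Suc k)) - enn2real (W (Suc k + 1)) \<ge> 1"
          by (rule step3[OF abk eqk IH(1)]) (use IH(2) d in simp_all)
        then show ?thesis using IH(2) unfolding h_def by simp
      qed
    qed
  qed
  have Wfin: "W k < \<top>" if "1 \<le> k" "k \<le> n" for k
  proof (cases "k = n")
    case True then show ?thesis using Wn by simp
  next
    case False then show ?thesis using inv[of k] that by auto
  qed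
  have tel: "(\<Sum>k=1..n-1. h k) = enn2real (W 1) - enn2real (W n)"
  proof -
    have "(\<Sum>k=1..n-1. h k) = - (\<Sum>k=1..n-1. enn2real (W (Suc k)) - enn2real (W k))"
      unfolding h_def by (simp add: sum_negf[symmetric])
    also have "\<dots> = enn2real (W 1) - enn2real (W n)"
      using n1 by (subst sum_Suc_diff) auto
    finally show ?thesis .
  qed
  show ?thesis
  proof (intro exI conjI allI impI)
    show "h 1 = 1" by (rule h1)
  next
    fix k assume "2 \<le> k \<and> k \<le> n - 1"
    then show "a k > 0" "a k * h k = 1 + b k * h (k - 1)" using inv[of k] by auto
  next
    fix k assume "1 \<le> k \<and> k \<le> n - 1"
    then show "h k \<ge> 1" using inv[of k] by auto
  next
    show "W 1 = ennreal (\<Sum>k=1..n-1. h k)" unfolding tel using Wn fin by (simp add: ennreal_enn2real)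
  qed

qed




primrec Gs :: "nat \<Rightarrow> (nat \<Rightarrow> real) \<Rightarrow> nat \<Rightarrow> nat \<Rightarrow> nat \<Rightarrow> real" where
  "Gs n p j0 0 i = 1"
| "Gs n p j0 (Suc t) i = (\<Sum>j\<in>{1..n}-{j0}. trans_prob n p i j * Gs n p j0 t j)"

definition Sp :: "nat \<Rightarrow> nat \<Rightarrow> nat \<Rightarrow> nat \<Rightarrow> nat list set" where
  "Sp n j0 t i = {xs. length xs = Suc t \<and> set xs \<subseteq> {1..n} \<and> xs ! 0 = i \<and> (\<forall>k\<in>{1..t}. xs ! k \<noteq> j0)}"

lemma Sp_finite: "finite (Sp n j0 t i)"
  by (rule finite_subset[OF _ finite_lists_length_eq[of "{1..n}" "Suc t"]]) (auto simp: Sp_def)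

lemma Sp_0: "i \<in> {1..n} \<Longrightarrow> Sp n j0 0 i = {[i]}"
  by (auto simp: Sp_def length_Suc_conv)

lemma Sp_Suc: "i \<in> {1..n} \<Longrightarrow> Sp n j0 (Suc t) i = Cons i ` (\<Union>j\<in>{1..n}-{j0}. Sp n j0 t j)"
proof (intro equalityI subsetI)
  fix xs assume "i \<in> {1..n}" "xs \<in> Sp n j0 (Suc t) i"
  then obtain x ys where xs: "xs = x # ys" and L: "length ys = Suc t" "set xs \<subseteq> {1..n}"
      "x = i" "\<forall>k\<in>{1..Suc t}. xs ! k \<noteq> j0"
    unfolding Sp_def by (auto simp: length_Suc_conv)
  have "ys ! 0 \<in> set ys" using L by simp
  moreover have "set ys \<subseteq> {1..n}" using L xs by simp
  ultimately have "ys ! 0 \<in> {1..n}" by blast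
  moreover have "ys ! 0 \<noteq> j0" using L(4) xs by force
  moreover have "ys \<in> Sp n j0 t (ys ! 0)"
    unfolding Sp_def using L xs by (auto dest: bspec[of _ _ "Suc _"])
  ultimately show "xs \<in> Cons i ` (\<Union>j\<in>{1..n}-{j0}. Sp n j0 t j)" using xs L by blast
next
  fix xs assume i: "i \<in> {1..n}" and "xs \<in> Cons i ` (\<Union>j\<in>{1..n}-{j0}. Sp n j0 t j)"
  then obtain j ys where xs: "xs = i # ys" and j: "j \<in> {1..n}-{j0}" and ys: "ys \<in> Sp n j0 t j" by blast
  have "\<forall>k\<in>{1..Suc t}. xs ! k \<noteq> j0"
  proof
    fix k assume k: "k \<in> {1..Suc t}"
    show "xs ! k \<noteq> j0"
    proof (cases "k = 1")
      case True then show ?thesis using xs j ys by (simp add: Sp_def)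
    next
      case False
      then obtain m where "k = Suc m" "m \<in> {1..t}" using k by (cases k) auto
      then show ?thesis using xs ys by (simp add: Sp_def)
    qed
  qed
  then show "xs \<in> Sp n j0 (Suc t) i" using xs ys i by (auto simp: Sp_def)
qed

lemma paths_sum:
  "i \<in> {1..n} \<Longrightarrow> (\<Sum>xs\<in>Sp n j0 t i. \<Prod>k<t. trans_prob n p (xs ! k) (xs ! Suc k)) = Gs n p j0 t i"
proof (induction t arbitrary: i)
  case 0 then show ?case by (simp add: Sp_0)
next
  case (Suc t)
  let ?f = "\<lambda>t xs. \<Prod>k<t. trans_prob n p (xs ! k) (xs ! Suc k)"
  have "(\<Sum>xs\<in>Sp n j0 (Suc t) i. ?f (Suc t) xs) = (\<Sum>ys\<in>(\<Union>j\<in>{1..n}-{j0}. Sp n j0 t j). ?f (Suc t) (i # ys))"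
    unfolding Sp_Suc[OF Suc.prems] by (subst sum.reindex) (auto simp: inj_on_def)
  also have "\<dots> = (\<Sum>j\<in>{1..n}-{j0}. \<Sum>ys\<in>Sp n j0 t j. ?f (Suc t) (i # ys))"
    by (rule sum.UNION_disjoint) (simp, simp add: Sp_finite, auto simp: Sp_def)
  also have "\<dots> = (\<Sum>j\<in>{1..n}-{j0}. \<Sum>ys\<in>Sp n j0 t j. trans_prob n p i j * ?f t ys)"
    by (intro sum.cong refl) (auto simp del: prod.lessThan_Suc simp add: Sp_def prod.lessThan_Suc_shift)
  also have "\<dots> = (\<Sum>j\<in>{1..n}-{j0}. trans_prob n p i j * Gs n p j0 t j)"
    by (intro sum.cong refl) (simp add: sum_distrib_left[symmetric] Suc.IH)
  finally show ?case by simp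
qed

lemma meas_bound:
  assumes ch: "is_chain M X n p i0" and i0: "i0 \<in> {1..n}"
  shows "Gs n p j0 t i0 \<le> measure M {\<omega>\<in>space M. \<forall>k\<in>{1..t}. X k \<omega> \<noteq> j0}"
proof -
  have ps: "prob_space M" and mX[measurable]: "\<And>t. X t \<in> measurable M (count_space UNIV)"
    and pf: "\<And>t xs. length xs = Suc t \<Longrightarrow> measure M {\<omega> \<in> space M. \<forall>k\<le>t. X k \<omega> = xs ! k} =
          (if xs ! 0 = i0 then (\<Prod>k<t. trans_prob n p (xs ! k) (xs ! Suc k)) else 0)"
    using ch unfolding is_chain_def by auto
  interpret prob_space M by (rule ps)
  define E where "E xs = {\<omega> \<in> space M. \<forall>k\<le>t. X k \<omega> = xs ! k}" for xs
  define A where "A = {\<omega>\<in>space M. \<forall>k\<in>{1..t}. X k \<omega> \<noteq> j0}"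
  have Esets: "E xs \<in> sets M" for xs unfolding E_def by measurable
  have Asets: "A \<in> sets M" unfolding A_def by measurable
  have disj: "disjoint_family_on E (Sp n j0 t i0)"
    unfolding disjoint_family_on_def
  proof (intro ballI impI)
    fix xs ys assume xs: "xs \<in> Sp n j0 t i0" and ys: "ys \<in> Sp n j0 t i0" and ne: "xs \<noteq> ys"
    have "\<exists>k<Suc t. xs ! k \<noteq> ys ! k"
    proof (rule ccontr)
      assume "\<not> ?thesis"
      then have "xs = ys" using xs ys by (intro nth_equalityI) (auto simp: Sp_def)
      then show False using ne by simp
    qed
    then obtain k where "k \<le> t" "xs ! k \<noteq> ys ! k" using less_Suc_eq_le by blast
    then show "E xs \<inter> E ys = {}" unfolding E_def by auto
  qed
  have "Gs n p j0 t i0 = (\<Sum>xs\<in>Sp n j0 t i0. \<Prod>k<t. trans_prob n p (xs ! k) (xs ! Suc k))"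
    using paths_sum[OF i0] by simp
  also have "\<dots> = (\<Sum>xs\<in>Sp n j0 t i0. measure M (E xs))"
    by (intro sum.cong refl) (auto simp: E_def pf Sp_def)
  also have "\<dots> = measure M (\<Union>xs\<in>Sp n j0 t i0. E xs)"
    by (rule finite_measure_finite_Union[symmetric]) (auto simp: Sp_finite Esets disj)
  also have "\<dots> \<le> measure M A"
  proof (rule finite_measure_mono)
    show "(\<Union>xs\<in>Sp n j0 t i0. E xs) \<subseteq> A"
      unfolding A_def E_def Sp_def by fastforce
  qed (rule Asets)
  finally show ?thesis unfolding A_def .
qed


lemma hit_ge:
  fixes X :: "nat \<Rightarrow> 'w \<Rightarrow> nat"
  shows "(\<Sum>t. indicator {\<omega>\<in>S. \<forall>k\<in>{1..t}. X k \<omega> \<noteq> j0} \<omega> :: ennreal) \<le> hit_time X j0 \<omega>"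
proof (cases "\<exists>t>0. X t \<omega> = j0")
  case False then show ?thesis unfolding hit_time_def if_not_P[OF False] by simp
next
  case True
  define \<tau> where "\<tau> = (LEAST t. t > 0 \<and> X t \<omega> = j0)"
  have \<tau>: "\<tau> > 0" "X \<tau> \<omega> = j0" using LeastI_ex[OF True] unfolding \<tau>_def by auto
  have z: "indicator {\<omega>\<in>S. \<forall>k\<in>{1..t}. X k \<omega> \<noteq> j0} \<omega> = (0::ennreal)" if "t \<notin> {..<\<tau>}" for t
  proof -
    have "\<tau> \<in> {1..t}" using that \<tau> by auto
    then show ?thesis using \<tau> by (auto simp: indicator_def)
  qed
  have "(\<Sum>t. indicator {\<omega>\<in>S. \<forall>k\<in>{1..t}. X k \<omega> \<noteq> j0} \<omega> :: ennreal)
      = (\<Sum>t<\<tau>. indicator {\<omega>\<in>S. \<forall>k\<in>{1..t}. X k \<omega> \<noteq> j0} \<omega>)"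
    by (rule suminf_finite) (simp, rule z)
  also have "\<dots> \<le> (\<Sum>t<\<tau>. (1::ennreal))"
    by (intro sum_mono) (auto simp: indicator_def)
  also have "\<dots> = of_nat \<tau>" by simp
  also have "\<dots> = hit_time X j0 \<omega>" using True unfolding hit_time_def \<tau>_def by simp
  finally show ?thesis .
qed

lemma int_bound:
  assumes ch: "is_chain M X n p i0" and i0: "i0 \<in> {1..n}"
  shows "(\<Sum>t. ennreal (Gs n p j0 t i0)) \<le> (\<integral>\<^sup>+ \<omega>. hit_time X j0 \<omega> \<partial>M)"
proof -
  have ps: "prob_space M" and mX[measurable]: "\<And>t. X t \<in> measurable M (count_space UNIV)"
    using ch unfolding is_chain_def by auto
  interpret prob_space M by (rule ps)
  define A where "A t = {\<omega>\<in>space M. \<forall>k\<in>{1..t}. X k \<omega> \<noteq> j0}" for t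
  have Asets[measurable]: "A t \<in> sets M" for t unfolding A_def by measurable
  have "(\<Sum>t. ennreal (Gs n p j0 t i0)) \<le> (\<Sum>t. emeasure M (A t))"
  proof (rule suminf_le)
    fix t show "ennreal (Gs n p j0 t i0) \<le> emeasure M (A t)"
      using meas_bound[OF ch i0, of j0 t] unfolding A_def by (simp add: emeasure_eq_measure)
  qed auto
  also have "\<dots> = (\<Sum>t. \<integral>\<^sup>+ \<omega>. indicator (A t) \<omega> \<partial>M)"
    by (simp add: nn_integral_indicator)
  also have "\<dots> = (\<integral>\<^sup>+ \<omega>. (\<Sum>t. indicator (A t) \<omega>) \<partial>M)"
    by (rule nn_integral_suminf[symmetric]) simp
  also have "\<dots> \<le> (\<integral>\<^sup>+ \<omega>. hit_time X j0 \<omega> \<partial>M)"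
    unfolding A_def by (rule nn_integral_mono) (rule hit_ge)
  finally show ?thesis .
qed


lemma Gs_nonneg:
  assumes pnn: "\<And>i j. trans_prob n p i j \<ge> 0"
  shows "Gs n p j0 t i \<ge> 0"
  by (induction t arbitrary: i) (auto intro!: sum_nonneg mult_nonneg_nonneg pnn)

lemma fp:
  assumes pnn: "\<And>i j. trans_prob n p i j \<ge> 0"
  shows "(\<Sum>t. ennreal (Gs n p j0 t i)) =
    1 + (\<Sum>j\<in>{1..n}-{j0}. ennreal (trans_prob n p i j) * (\<Sum>t. ennreal (Gs n p j0 t j)))"
proof -
  define f where "f t = ennreal (Gs n p j0 t i)" for t
  have sh: "(\<lambda>t. f (Suc t)) = (\<lambda>t. \<Sum>j\<in>{1..n}-{j0}. ennreal (trans_prob n p i j) * ennreal (Gs n p j0 t j))"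
    unfolding f_def
    by (auto simp: sum_ennreal[symmetric] ennreal_mult' pnn Gs_nonneg[OF pnn] mult_nonneg_nonneg intro!: ext)
  have "(\<Sum>t. f (Suc t)) = (\<Sum>j\<in>{1..n}-{j0}. \<Sum>t. ennreal (trans_prob n p i j) * ennreal (Gs n p j0 t j))"
    unfolding sh by (rule suminf_sum) (rule summableI)
  also have "\<dots> = (\<Sum>j\<in>{1..n}-{j0}. ennreal (trans_prob n p i j) * (\<Sum>t. ennreal (Gs n p j0 t j)))"
    by (simp add: ennreal_suminf_cmult)
  finally have e: "(\<Sum>t. f (Suc t)) = \<dots>" .
  have "(\<lambda>t. f (Suc t)) sums (\<Sum>t. f (Suc t))" by (rule summable_sums[OF summableI])
  then have "f sums ((\<Sum>t. f (Suc t)) + f 0)" by (rule sums_Suc)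
  then have "suminf f = (\<Sum>t. f (Suc t)) + f 0" by (rule sums_unique[symmetric])
  then show ?thesis unfolding e by (simp add: add.commute f_def[abs_def])
qed




lemma tp_nonneg:
  assumes "\<And>i. 2 \<le> i \<Longrightarrow> i \<le> n - 1 \<Longrightarrow> 0 \<le> \<pi> i \<and> \<pi> i \<le> 1"
  shows "trans_prob n \<pi> i j \<ge> 0"
  using assms[of i] unfolding trans_prob_def by auto

lemma sum_interior:
  fixes V :: "nat \<Rightarrow> ennreal"
  assumes n1: "n > 1" and i: "2 \<le> i" "i \<le> n - 1"
  shows "(\<Sum>j\<in>{1..n}-{tg}. ennreal (trans_prob n \<pi> i j) * V j)
    = ennreal (\<pi> i) * (if i + 1 = tg then 0 else V (i + 1)) + ennreal (1 - \<pi> i) * (if i - 1 = tg then 0 else V (i - 1))"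
proof -
  have e: "ennreal (trans_prob n \<pi> i j) * V j =
      (if j = i + 1 then ennreal (\<pi> i) * V j else 0) + (if j = i - 1 then ennreal (1 - \<pi> i) * V j else 0)" for j
    using i n1 unfolding trans_prob_def by auto
  have m: "i + 1 \<in> {1..n}" "i - 1 \<in> {1..n}" using i by auto
  show ?thesis unfolding e sum.distrib using m by (simp add: sum.delta)
qed

lemma sum_one:
  fixes V :: "nat \<Rightarrow> ennreal"
  assumes n1: "n > 1"
  shows "(\<Sum>j\<in>{1..n}-{tg}. ennreal (trans_prob n \<pi> 1 j) * V j) = (if 2 = tg then 0 else V 2)"
proof -
  have e: "ennreal (trans_prob n \<pi> 1 j) * V j = (if j = 2 then V j else 0)" for j
    unfolding trans_prob_def by auto
  show ?thesis unfolding e using n1 by (simp add: sum.delta)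
qed

lemma sum_n:
  fixes V :: "nat \<Rightarrow> ennreal"
  assumes n1: "n > 1"
  shows "(\<Sum>j\<in>{1..n}-{tg}. ennreal (trans_prob n \<pi> n j) * V j) = (if n - 1 = tg then 0 else V (n - 1))"
proof -
  have e: "ennreal (trans_prob n \<pi> n j) * V j = (if j = n - 1 then V j else 0)" for j
    using n1 unfolding trans_prob_def by auto
  show ?thesis unfolding e using n1 by (simp add: sum.delta)
qed

theorem lemma1:
  fixes n :: nat and \<pi> :: "nat \<Rightarrow> real"
    and M :: "'a measure" and X :: "nat \<Rightarrow> 'a \<Rightarrow> nat"
    and N :: "'b measure" and Y :: "nat \<Rightarrow> 'b \<Rightarrow> nat"
  assumes "n > 1"
    and "\<And>i. 2 \<le> i \<Longrightarrow> i \<le> n - 1 \<Longrightarrow> 0 \<le> \<pi> i \<and> \<pi> i \<le> 1"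
    and "is_chain M X n \<pi> 1"
    and "is_chain N Y n \<pi> n"
  shows "(\<integral>\<^sup>+ \<omega>. hit_time X n \<omega> \<partial>M) + (\<integral>\<^sup>+ \<omega>. hit_time Y 1 \<omega> \<partial>N)
           \<ge> 2 * of_nat ((n - 1) ^ 2)"
proof -
  note n1 = assms(1) and pr = assms(2)
  have pnn: "\<And>i j. trans_prob n \<pi> i j \<ge> 0" by (rule tp_nonneg[OF pr])
  define VX where "VX i = (\<Sum>t. ennreal (Gs n \<pi> n t i))" for i
  define VY where "VY i = (\<Sum>t. ennreal (Gs n \<pi> 1 t i))" for i
  have IX: "VX 1 \<le> (\<integral>\<^sup>+ \<omega>. hit_time X n \<omega> \<partial>M)"
    unfolding VX_def by (rule int_bound[OF assms(3)]) (use n1 in simp)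
  have IY: "VY n \<le> (\<integral>\<^sup>+ \<omega>. hit_time Y 1 \<omega> \<partial>N)"
    unfolding VY_def by (rule int_bound[OF assms(4)]) (use n1 in simp)
  have fX: "VX i = 1 + (\<Sum>j\<in>{1..n}-{n}. ennreal (trans_prob n \<pi> i j) * VX j)" for i
    unfolding VX_def by (rule fp[OF pnn])
  have fY: "VY i = 1 + (\<Sum>j\<in>{1..n}-{1}. ennreal (trans_prob n \<pi> i j) * VY j)" for i
    unfolding VY_def by (rule fp[OF pnn])
  show ?thesis
  proof (cases "VX 1 < \<top> \<and> VY n < \<top>")
    case False
    then have "(\<integral>\<^sup>+ \<omega>. hit_time X n \<omega> \<partial>M) = \<top> \<or> (\<integral>\<^sup>+ \<omega>. hit_time Y 1 \<omega> \<partial>N) = \<top>"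
      using IX IY by (metis less_top top_unique)
    then show ?thesis by auto
  next
    case True
    define W where "W k = (if k = n then 0 else VX k)" for k
    define W' where "W' k = (if k = n then 0 else VY (n + 1 - k))" for k
    obtain h where h: "h 1 = 1" "\<forall>k. 2 \<le> k \<and> k \<le> n - 1 \<longrightarrow> \<pi> k > 0 \<and> \<pi> k * h k = 1 + (1 - \<pi> k) * h (k - 1)"
        "W 1 = ennreal (\<Sum>k=1..n-1. h k)" "\<forall>k. 1 \<le> k \<and> k \<le> n - 1 \<longrightarrow> h k \<ge> 1"
    proof -
      have "\<exists>h. h 1 = 1 \<and> (\<forall>k. 2 \<le> k \<and> k \<le> n - 1 \<longrightarrow> \<pi> k > 0 \<and> \<pi> k * h k = 1 + (1 - \<pi> k) * h (k - 1))
           \<and> W 1 = ennreal (\<Sum>k=1..n-1. h k) \<and> (\<forall>k. 1 \<le> k \<and> k \<le> n - 1 \<longrightarrow> h k \<ge> 1)"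
      proof (rule propag[OF n1])
        show "W n = 0" by (simp add: W_def)
        show "W 1 = 1 + W 2" using fX[of 1] sum_one[OF n1] n1 by (simp add: W_def)
        show "W 1 < \<top>" using True n1 by (simp add: W_def)
        fix k assume k: "2 \<le> k" "k \<le> n - 1"
        show "0 \<le> \<pi> k \<and> 0 \<le> 1 - \<pi> k \<and> \<pi> k + (1 - \<pi> k) = 1" using pr[OF k] by simp
        show "W k = 1 + ennreal (\<pi> k) * W (k + 1) + ennreal (1 - \<pi> k) * W (k - 1)"
          using fX[of k] sum_interior[OF n1 k, where tg=n and \<pi>=\<pi> and V=VX] k by (auto simp: W_def add_ac)
      qed
      then show ?thesis using that by blast
    qed
    obtain h' where h': "h' 1 = 1" "\<forall>k. 2 \<le> k \<and> k \<le> n - 1 \<longrightarrow> 1 - \<pi> (n + 1 - k) > 0 \<and>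
          (1 - \<pi> (n + 1 - k)) * h' k = 1 + \<pi> (n + 1 - k) * h' (k - 1)"
        "W' 1 = ennreal (\<Sum>k=1..n-1. h' k)" "\<forall>k. 1 \<le> k \<and> k \<le> n - 1 \<longrightarrow> h' k \<ge> 1"
    proof -
      have "\<exists>h. h 1 = 1 \<and> (\<forall>k. 2 \<le> k \<and> k \<le> n - 1 \<longrightarrow> 1 - \<pi> (n + 1 - k) > 0 \<and>
          (1 - \<pi> (n + 1 - k)) * h k = 1 + \<pi> (n + 1 - k) * h (k - 1))
           \<and> W' 1 = ennreal (\<Sum>k=1..n-1. h k) \<and> (\<forall>k. 1 \<le> k \<and> k \<le> n - 1 \<longrightarrow> h k \<ge> 1)"
      proof (rule propag[OF n1])
        show "W' n = 0" by (simp add: W'_def)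
        show "W' 1 = 1 + W' 2" using fY[of n] sum_n[OF n1] n1 by (auto simp: W'_def)
        show "W' 1 < \<top>" using True n1 by (simp add: W'_def)
        fix k assume k: "2 \<le> k" "k \<le> n - 1"
        have i: "2 \<le> n + 1 - k" "n + 1 - k \<le> n - 1" using k by auto
        show "0 \<le> 1 - \<pi> (n + 1 - k) \<and> 0 \<le> \<pi> (n + 1 - k) \<and> (1 - \<pi> (n + 1 - k)) + \<pi> (n + 1 - k) = 1"
          using pr[OF i] by simp
        have a1: "n + 1 - k + 1 = n + 1 - (k - 1)" "k - 1 \<noteq> n" using k by auto
        have a2: "n + 1 - k - 1 = n + 1 - (k + 1)" "(n + 1 - k - 1 = 1) = (k + 1 = n)" using k by auto
        show "W' k = 1 + ennreal (1 - \<pi> (n + 1 - k)) * W' (k + 1) + ennreal (\<pi> (n + 1 - k)) * W' (k - 1)"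
          using fY[of "n + 1 - k"] sum_interior[OF n1 i(1,2), where tg=1 and \<pi>=\<pi> and V=VY] k a1 a2 by (auto simp: W'_def add_ac)
      qed
      then show ?thesis using that by blast
    qed
    have p01: "0 < \<pi> k \<and> \<pi> k < 1" if k: "2 \<le> k" "k \<le> n - 1" for k
    proof -
      have i: "2 \<le> n + 1 - k" "n + 1 - k \<le> n - 1" "n + 1 - (n + 1 - k) = k" using k by auto
      show ?thesis using h(2) k h'(2) i by force
    qed
    have A: "(\<Sum>k=1..n-1. h k) + (\<Sum>k=1..n-1. h' k) \<ge> 2 * real ((n - 1)^2)"
      by (rule alg[where p=\<pi> and h=h and h'=h', OF n1 p01 h(1) _ h'(1)]) (use h(2) h'(2) in auto)
    have s0: "(\<Sum>k=1..n-1. h k) \<ge> 0" "(\<Sum>k=1..n-1. h' k) \<ge> 0"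
      apply (rule sum_nonneg) using h(4) apply force
      apply (rule sum_nonneg) using h'(4) apply force
      done
    have "ennreal (2 * real ((n - 1)^2)) \<le> ennreal ((\<Sum>k=1..n-1. h k) + (\<Sum>k=1..n-1. h' k))"
      using A by (rule ennreal_leI)
    also have "\<dots> = W 1 + W' 1" using h(3) h'(3) s0 by (simp add: ennreal_plus)
    also have "\<dots> = VX 1 + VY n" using n1 by (simp add: W_def W'_def)
    also have "\<dots> \<le> (\<integral>\<^sup>+ \<omega>. hit_time X n \<omega> \<partial>M) + (\<integral>\<^sup>+ \<omega>. hit_time Y 1 \<omega> \<partial>N)"
      using IX IY by (rule add_mono)
    finally show ?thesis by (simp add: ennreal_mult ennreal_of_nat_eq_real_of_nat)
  qed
qed



end
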